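(* Let $H$ be a graph and $k\ge2$, and suppose $G=\mathsf{TJ}_k(H)$ is triangle-free. Then every vertex of $G$ has degree at most $k$; in particular $\Delta(G)\le k$.
   Context: All graphs are finite, simple, undirected; $\Delta(G)$ is the maximum degree. A $k$-clique of a graph $H$ is a set of $k$ pairwise adjacent vertices. For a graph $H$ and integer $k\ge1$, the Token Jumping graph $\mathsf{TJ}_k(H)$ has as vertices the $k$-cliques of $H$, and two $k$-cliques $A,B$ are adjacent iff $|A\cap B|=k-1$. *)

theory Defs
  imports Main
begin

text \<open>A finite simple undirected graph: finite vertex set V and a symmetric,
irreflexive adjacency relation E (only its restriction to V matters).\<close>

definition simple_graph :: "'a set \<Rightarrow> ('a \<Rightarrow> 'a \<Rightarrow> bool) \<Rightarrow> bool" where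
  "simple_graph V E \<longleftrightarrow> finite V \<and> (\<forall>x y. E x y \<longrightarrow> E y x) \<and> (\<forall>x. \<not> E x x)"

definition is_clique :: "'a set \<Rightarrow> ('a \<Rightarrow> 'a \<Rightarrow> bool) \<Rightarrow> nat \<Rightarrow> 'a set \<Rightarrow> bool" where
  "is_clique V E k A \<longleftrightarrow> A \<subseteq> V \<and> finite A \<and> card A = k \<and>
     (\<forall>x\<in>A. \<forall>y\<in>A. x \<noteq> y \<longrightarrow> E x y)"

definition TJ_vertices :: "'a set \<Rightarrow> ('a \<Rightarrow> 'a \<Rightarrow> bool) \<Rightarrow> nat \<Rightarrow> 'a set set" where
  "TJ_vertices V E k = {A. is_clique V E k A}"

definition TJ_adj :: "nat \<Rightarrow> 'a set \<Rightarrow> 'a set \<Rightarrow> bool" where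
  "TJ_adj k A B \<longleftrightarrow> card (A \<inter> B) = k - 1"

definition triangle_free :: "'b set \<Rightarrow> ('b \<Rightarrow> 'b \<Rightarrow> bool) \<Rightarrow> bool" where
  "triangle_free W F \<longleftrightarrow>
     \<not> (\<exists>a\<in>W. \<exists>b\<in>W. \<exists>c\<in>W. F a b \<and> F b c \<and> F a c)"

definition degree :: "'b set \<Rightarrow> ('b \<Rightarrow> 'b \<Rightarrow> bool) \<Rightarrow> 'b \<Rightarrow> nat" where
  "degree W F v = card {u\<in>W. F v u}"

end

theory Submission
  imports Defs
begin

theorem lemma4p5:
  fixes V :: "'a set" and E :: "'a \<Rightarrow> 'a \<Rightarrow> bool" and k :: nat
  assumes "simple_graph V E"
    and "k \<ge> 2"
    and "triangle_free (TJ_vertices V E k) (TJ_adj k)"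
  shows "\<forall>A\<in>TJ_vertices V E k. degree (TJ_vertices V E k) (TJ_adj k) A \<le> k"
proof
  fix A assume A: "A \<in> TJ_vertices V E k"
  define W where "W = TJ_vertices V E k"
  define N where "N = {B\<in>W. TJ_adj k A B}"
  have fA: "finite A" "card A = k" using A by (auto simp: TJ_vertices_def is_clique_def)
  have fV: "finite V" using assms(1) by (simp add: simple_graph_def)
  have Bprops: "finite B \<and> card B = k \<and> card (A \<inter> B) = k - 1 \<and> card (A - B) = 1" if hB: "B \<in> N" for B
  proof -
    have "finite B" "card B = k" "card (A \<inter> B) = k - 1"
      using that by (auto simp: N_def W_def TJ_vertices_def is_clique_def TJ_adj_def)
    moreover have "card (A - B) = 1"
      using card_Diff_subset_Int[of A B] fA \<open>card (A \<inter> B) = k - 1\<close> assms(2)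
      by (simp add: Diff_Int2[symmetric])
    ultimately show ?thesis by blast
  qed
  define f where "f B = the_elem (A - B)" for B
  have fin: "f B \<in> A \<and> A - B = {f B}" if hB: "B \<in> N" for B
  proof -
    obtain a where "A - B = {a}" using Bprops[OF hB] by (metis card_1_singletonE)
    thus ?thesis by (auto simp: f_def)
  qed
  have inj: "inj_on f N"
  proof (rule inj_onI, rule ccontr)
    fix B1 B2 assume b1: "B1 \<in> N" and b2: "B2 \<in> N" and eq: "f B1 = f B2" and ne: "B1 \<noteq> B2"
    let ?a = "f B1"
    have d1: "A - B1 = {?a}" and d2: "A - B2 = {?a}" using fin b1 b2 eq by auto
    have p1: "finite B1 \<and> card B1 = k \<and> card (A \<inter> B1) = k - 1" using Bprops[OF b1] by blast
    have p2: "finite B2 \<and> card B2 = k" using Bprops[OF b2] by blast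
    have sub: "A \<inter> B1 \<subseteq> B1 \<inter> B2" using d1 d2 by blast
    have ge: "card (B1 \<inter> B2) \<ge> k - 1"
      using card_mono[OF _ sub] p1 by auto
    have "B1 \<inter> B2 \<noteq> B1"
    proof
      assume "B1 \<inter> B2 = B1"
      hence "B1 \<subseteq> B2" by blast
      hence "B1 = B2" using card_subset_eq p1 p2 by metis
      thus False using ne by simp
    qed
    hence "B1 \<inter> B2 \<subset> B1" by blast
    hence "card (B1 \<inter> B2) < k" using psubset_card_mono p1 by metis
    hence "card (B1 \<inter> B2) = k - 1" using ge by linarith
    hence "TJ_adj k B1 B2" by (simp add: TJ_adj_def)
    moreover have "TJ_adj k A B1" "TJ_adj k A B2" "B1 \<in> W" "B2 \<in> W" using b1 b2 by (auto simp: N_def)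
    ultimately show False using assms(3) A unfolding triangle_free_def W_def by blast
  qed
  have "card N \<le> card A"
    by (rule card_inj_on_le[OF inj]) (use fin fA in auto)
  thus "degree (TJ_vertices V E k) (TJ_adj k) A \<le> k"
    using fA by (simp add: degree_def N_def W_def)
qed

end
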